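(* Let $X$ be a real Banach space and let $A \subset X$ be a balanced, bounded, convex, closed subset. Assume there is a finite subset $O \subset X$ such that $B_X \subset A + O$. Then for every $\lambda$ with $0<\lambda < 1/2$, $A$ contains a finite-codimensional ball of radius $\lambda$, i.e. there exist $x \in A$ and a finite-codimensional linear subspace $Y \subset X$ with $x + \lambda B_Y \subset A$.
   Context: $B_X$ is the closed unit ball of $X$ and $B_Y = B_X \cap Y$. $A$ is balanced if $tA \subset A$ for all $|t| \le 1$. $A + O$ is the Minkowski sum $\{a+o: a\in A, o\in O\}$. *)

theory Defs
  imports "HOL-Analysis.Analysis"
begin

definition balanced :: "'a::real_vector set \<Rightarrow> bool" where
  "balanced A \<longleftrightarrow> (\<forall>t::real. \<bar>t\<bar> \<le> 1 \<longrightarrow> (\<lambda>a. t *\<^sub>R a) ` A \<subseteq> A)"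

definition minkowski_sum :: "'a::real_vector set \<Rightarrow> 'a set \<Rightarrow> 'a set" where
  "minkowski_sum A Os = {a + b | a b. a \<in> A \<and> b \<in> Os}"

definition finite_codim_subspace :: "'a::real_vector set \<Rightarrow> bool" where
  "finite_codim_subspace Y \<longleftrightarrow> subspace Y \<and> (\<exists>F. finite F \<and> span (Y \<union> F) = UNIV)"

end

theory Submission
  imports Defs
begin


definition sublin :: "('a::real_vector \<Rightarrow> real) \<Rightarrow> bool" where
  "sublin q \<longleftrightarrow> (\<forall>x y. q (x + y) \<le> q x + q y) \<and> (\<forall>c x. 0 \<le> c \<longrightarrow> q (c *\<^sub>R x) = c * q x)"

lemma sublin_add: "sublin q \<Longrightarrow> q (x + y) \<le> q x + q y"
  unfolding sublin_def by blast

lemma sublin_scale: "sublin q \<Longrightarrow> 0 \<le> c \<Longrightarrow> q (c *\<^sub>R x) = c * q x"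
  unfolding sublin_def by blast

lemma sublin_0: "sublin q \<Longrightarrow> q 0 = 0"
  using sublin_scale[of q 0 0] by simp

lemma sublin_neg: "sublin q \<Longrightarrow> - q (-x) \<le> q x"
  using sublin_add[of q x "-x"] sublin_0[of q] by simp

definition rr :: "('a::real_vector \<Rightarrow> real) \<Rightarrow> 'a \<Rightarrow> 'a \<Rightarrow> real" where
  "rr m x y = Inf ((\<lambda>t. m (y + t *\<^sub>R x) - t * m x) ` {0..})"

lemma rr_bdd:
  assumes "sublin m"
  shows "bdd_below ((\<lambda>t. m (y + t *\<^sub>R x) - t * m x) ` {0..})"
proof (rule bdd_belowI2[where m="- m (-y)"])
  fix t :: real assume "t \<in> {0..}"
  hence t: "t \<ge> 0" by simp
  have "m (t *\<^sub>R x) \<le> m (y + t *\<^sub>R x) + m (-y)"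
    using sublin_add[OF assms, of "y + t *\<^sub>R x" "-y"] by simp
  thus "- m (-y) \<le> m (y + t *\<^sub>R x) - t * m x"
    using sublin_scale[OF assms t] by simp
qed

lemma rr_le:
  assumes "sublin m" "0 \<le> t"
  shows "rr m x y \<le> m (y + t *\<^sub>R x) - t * m x"
  unfolding rr_def using assms by (intro cInf_lower rr_bdd) auto

lemma rr_ge:
  assumes "\<And>t. 0 \<le> t \<Longrightarrow> a \<le> m (y + t *\<^sub>R x) - t * m x"
  shows "a \<le> rr m x y"
  unfolding rr_def using assms by (intro cInf_greatest) auto

lemma rr_le_m: "sublin m \<Longrightarrow> rr m x y \<le> m y"
  using rr_le[of m 0 x y] by simp

lemma rr_negx: "sublin m \<Longrightarrow> rr m x (-x) \<le> - m x"
  using rr_le[of m 1 x "-x"] sublin_0[of m] by simp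

lemma rr_sublin:
  assumes m: "sublin m"
  shows "sublin (rr m x)"
proof -
  have add: "rr m x (y1 + y2) \<le> rr m x y1 + rr m x y2" for y1 y2
  proof -
    have key: "rr m x (y1 + y2) \<le> (m (y1 + t1 *\<^sub>R x) - t1 * m x) + (m (y2 + t2 *\<^sub>R x) - t2 * m x)"
      if "0 \<le> t1" "0 \<le> t2" for t1 t2
    proof -
      have "rr m x (y1 + y2) \<le> m ((y1 + y2) + (t1 + t2) *\<^sub>R x) - (t1 + t2) * m x"
        using rr_le[OF m, of "t1 + t2"] that by simp
      also have "(y1 + y2) + (t1 + t2) *\<^sub>R x = (y1 + t1 *\<^sub>R x) + (y2 + t2 *\<^sub>R x)"
        by (simp add: algebra_simps)
      finally show ?thesis using sublin_add[OF m, of "y1 + t1 *\<^sub>R x" "y2 + t2 *\<^sub>R x"]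
        by (simp add: algebra_simps)
    qed
    have "rr m x (y1 + y2) - (m (y2 + t2 *\<^sub>R x) - t2 * m x) \<le> rr m x y1" if "0 \<le> t2" for t2
      by (rule rr_ge) (use key that in force)
    hence "rr m x (y1 + y2) - rr m x y1 \<le> rr m x y2"
      by (intro rr_ge) force
    thus ?thesis by simp
  qed
  have zero: "rr m x 0 = 0"
  proof (rule antisym)
    show "rr m x 0 \<le> 0" using rr_le_m[OF m, of x 0] sublin_0[OF m] by simp
    show "0 \<le> rr m x 0" by (rule rr_ge) (simp add: sublin_scale[OF m])
  qed
  have sc: "rr m x (c *\<^sub>R y) = c * rr m x y" if c: "0 \<le> c" for c y
  proof (cases "c = 0")
    case True thus ?thesis using zero by simp
  next
    case False
    hence c: "c > 0" using c by simp
    have 1: "rr m x (c *\<^sub>R y) \<le> c * rr m x y"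
    proof -
      have "rr m x (c *\<^sub>R y) / c \<le> rr m x y"
      proof (rule rr_ge)
        fix t :: real assume t: "0 \<le> t"
        have "rr m x (c *\<^sub>R y) \<le> m (c *\<^sub>R y + (c * t) *\<^sub>R x) - (c * t) * m x"
          using rr_le[OF m, of "c * t"] t c by simp
        moreover have "m (c *\<^sub>R y + (c * t) *\<^sub>R x) = c * m (y + t *\<^sub>R x)"
          using sublin_scale[OF m, of c "y + t *\<^sub>R x"] c by (simp add: scaleR_right_distrib)
        ultimately have "rr m x (c *\<^sub>R y) \<le> c * (m (y + t *\<^sub>R x) - t * m x)"
          by (simp add: algebra_simps)
        thus "rr m x (c *\<^sub>R y) / c \<le> m (y + t *\<^sub>R x) - t * m x"
          using c by (simp add: divide_le_eq mult.commute)
      qed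
      thus ?thesis using c by (simp add: divide_le_eq mult.commute)
    qed
    have 2: "c * rr m x y \<le> rr m x (c *\<^sub>R y)"
    proof (rule rr_ge)
      fix t :: real assume t: "0 \<le> t"
      have "rr m x y \<le> m (y + (t / c) *\<^sub>R x) - (t / c) * m x"
        using rr_le[OF m, of "t / c"] t c by simp
      hence "c * rr m x y \<le> c * (m (y + (t / c) *\<^sub>R x) - (t / c) * m x)"
        using c by simp
      also have "\<dots> = m (c *\<^sub>R (y + (t / c) *\<^sub>R x)) - t * m x"
        using sublin_scale[OF m, of c "y + (t / c) *\<^sub>R x"] c by (simp add: algebra_simps)
      also have "c *\<^sub>R (y + (t / c) *\<^sub>R x) = c *\<^sub>R y + t *\<^sub>R x"
        using c by (simp add: scaleR_right_distrib)
      finally show "c * rr m x y \<le> m (c *\<^sub>R y + t *\<^sub>R x) - t * m x" .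
    qed
    show ?thesis using 1 2 by simp
  qed
  show ?thesis unfolding sublin_def using add sc by blast
qed

lemma sublin_linear_dominated:
  assumes q0: "sublin (q0 :: 'a::real_vector \<Rightarrow> real)"
  shows "\<exists>f. linear f \<and> (\<forall>x. f x \<le> q0 x) \<and> f p = q0 p"
proof -
  define S where "S = {q. sublin q \<and> (\<forall>x. q x \<le> q0 x) \<and> q (-p) \<le> - q0 p}"
  define P where "P = (\<lambda>(q::'a \<Rightarrow> real) q'. \<forall>x. q' x \<le> q x)"
  have po: "partial_order_on S (relation_of P S)"
    unfolding partial_order_on_def preorder_on_def refl_on_def trans_def antisym_def relation_of_def P_def
    by (auto intro: order_trans ext antisym simp: fun_eq_iff)
  have ch: "\<exists>u\<in>S. \<forall>a\<in>C. P a u" if C: "C \<in> Chains (relation_of P S)" for C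
  proof (cases "C = {}")
    case True
    have "rr q0 p \<in> S" unfolding S_def
      using rr_sublin[OF q0] rr_le_m[OF q0] rr_negx[OF q0] by blast
    thus ?thesis using True by blast
  next
    case False
    have CS: "C \<subseteq> S" using C unfolding Chains_def relation_of_def by blast
    have cmp: "(\<forall>x. q2 x \<le> q1 x) \<or> (\<forall>x. q1 x \<le> q2 x)" if "q1 \<in> C" "q2 \<in> C" for q1 q2
      using C that unfolding Chains_def relation_of_def P_def by blast
    have subl: "sublin q" "\<And>x. q x \<le> q0 x" "q (-p) \<le> - q0 p" if "q \<in> C" for q
      using CS that unfolding S_def by blast+
    define u where "u x = Inf ((\<lambda>q. q x) ` C)" for x
    have bdd: "bdd_below ((\<lambda>q. q x) ` C)" for x
    proof (rule bdd_belowI2[where m="- q0 (-x)"])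
      fix q assume "q \<in> C"
      thus "- q0 (-x) \<le> q x" using subl(1)[of q] subl(2)[of q "-x"] sublin_neg[of q x] by force
    qed
    have u_le: "u x \<le> q x" if "q \<in> C" for q x
      unfolding u_def using that bdd by (intro cInf_lower) auto
    have u_ge: "a \<le> u x" if "\<And>q. q \<in> C \<Longrightarrow> a \<le> q x" for a x
      unfolding u_def using that False by (intro cInf_greatest) auto
    have add: "u (x + y) \<le> u x + u y" for x y
    proof -
      have key: "u (x + y) \<le> q1 x + q2 y" if qq: "q1 \<in> C" "q2 \<in> C" for q1 q2
      proof -
        obtain qk where qk: "qk \<in> C" "qk x \<le> q1 x" "qk y \<le> q2 y"
          using cmp[OF qq] qq by blast
        have "u (x + y) \<le> qk (x + y)" using u_le qk by blast
        also have "\<dots> \<le> qk x + qk y" using sublin_add subl(1)[OF qk(1)] by blast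
        finally show ?thesis using qk by simp
      qed
      have "u (x + y) - q2 y \<le> u x" if "q2 \<in> C" for q2
        by (rule u_ge) (use key that in force)
      hence "u (x + y) - u x \<le> u y" by (intro u_ge) force
      thus ?thesis by simp
    qed
    obtain q1 where q1: "q1 \<in> C" using False by blast
    have zero: "u 0 = 0"
    proof (rule antisym)
      show "u 0 \<le> 0" using u_le[OF q1, of 0] sublin_0[OF subl(1)[OF q1]] by simp
      show "0 \<le> u 0" by (rule u_ge) (simp add: sublin_0 subl(1))
    qed
    have sc: "u (c *\<^sub>R x) = c * u x" if c: "0 \<le> c" for c x
    proof (cases "c = 0")
      case True thus ?thesis using zero by simp
    next
      case False
      hence c: "c > 0" using c by simp
      have 1: "u (c *\<^sub>R x) / c \<le> u x"
      proof (rule u_ge)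
        fix q assume q: "q \<in> C"
        have "u (c *\<^sub>R x) \<le> c * q x" using u_le[OF q, of "c *\<^sub>R x"] sublin_scale[OF subl(1)[OF q], of c x] c by simp
        thus "u (c *\<^sub>R x) / c \<le> q x" using c by (simp add: divide_le_eq mult.commute)
      qed
      have 2: "c * u x \<le> u (c *\<^sub>R x)"
      proof (rule u_ge)
        fix q assume q: "q \<in> C"
        have "c * u x \<le> c * q x" using u_le[OF q, of x] c by simp
        thus "c * u x \<le> q (c *\<^sub>R x)" using sublin_scale[OF subl(1)[OF q], of c x] c by simp
      qed
      show ?thesis using 1 2 c by (simp add: divide_le_eq mult.commute)
    qed
    have "u \<in> S" unfolding S_def sublin_def
    proof (intro CollectI conjI allI impI)
      show "u (x + y) \<le> u x + u y" for x y by (rule add)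
      show "u (c *\<^sub>R x) = c * u x" if "0 \<le> c" for c x using sc that by blast
      show "u x \<le> q0 x" for x using u_le[OF q1, of x] subl(2)[OF q1, of x] by simp
      show "u (-p) \<le> - q0 p" using u_le[OF q1, of "-p"] subl(3)[OF q1] by simp
    qed
    moreover have "\<forall>a\<in>C. P a u" unfolding P_def using u_le by blast
    ultimately show ?thesis by blast
  qed
  from predicate_Zorn[OF po ch] obtain m where m: "m \<in> S" "\<And>a. a \<in> S \<Longrightarrow> P m a \<Longrightarrow> a = m"
    by blast
  have ms: "sublin m" and mq: "\<And>x. m x \<le> q0 x" and mp: "m (-p) \<le> - q0 p"
    using m(1) unfolding S_def by blast+
  have eq: "rr m x = m" for x
  proof (rule m(2))
    show "rr m x \<in> S" unfolding S_def
      using rr_sublin[OF ms] rr_le_m[OF ms] mq mp order_trans by blast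
    show "P m (rr m x)" unfolding P_def using rr_le_m[OF ms] by blast
  qed
  have sup: "m y + m x \<le> m (y + x)" for x y
    using rr_le[OF ms, of 1 x y] eq[of x] by simp
  have additive: "m (x + y) = m x + m y" for x y
    using sup[of y x] sublin_add[OF ms, of x y] by (simp add: add.commute)
  have negm: "m (-x) = - m x" for x
    using additive[of x "-x"] sublin_0[OF ms] by simp
  have lin: "linear m"
  proof (rule linearI)
    show "m (x + y) = m x + m y" for x y by (rule additive)
    show "m (c *\<^sub>R x) = c *\<^sub>R m x" for c x
    proof (cases "0 \<le> c")
      case True thus ?thesis using sublin_scale[OF ms True] by simp
    next
      case False
      have "m (c *\<^sub>R x) = m ((-c) *\<^sub>R (-x))" by simp
      also have "\<dots> = (-c) * m (-x)" using sublin_scale[OF ms, of "-c" "-x"] False by (simp del: scaleR_minus_left scaleR_minus_right minus_minus)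
      finally show ?thesis using negm by simp
    qed
  qed
  have "m p = q0 p" using mq[of p] mp negm[of p] by simp
  thus ?thesis using lin mq by blast
qed



lemma balancedD: "balanced A \<Longrightarrow> \<bar>t\<bar> \<le> 1 \<Longrightarrow> a \<in> A \<Longrightarrow> t *\<^sub>R a \<in> A"
  unfolding balanced_def by blast

lemma kernels_finite_codim:
  fixes f :: "'b \<Rightarrow> 'a::real_vector \<Rightarrow> real"
  assumes "finite S" "\<forall>w\<in>S. linear (f w)"
  shows "\<exists>F. finite F \<and> span ({y. \<forall>w\<in>S. f w y = 0} \<union> F) = UNIV"
  using assms
proof (induction S rule: finite_induct)
  case empty
  show ?case by (intro exI[of _ "{}"]) simp
next
  case (insert g S)
  then obtain F where F: "finite F" "span ({y. \<forall>w\<in>S. f w y = 0} \<union> F) = UNIV" by auto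
  define Y where "Y = {y. \<forall>w\<in>S. f w y = 0}"
  define Y' where "Y' = {y. \<forall>w\<in>insert g S. f w y = 0}"
  have lg: "linear (f g)" and lS: "\<And>w. w \<in> S \<Longrightarrow> linear (f w)" using insert.prems by auto
  show ?case
  proof (cases "\<forall>y\<in>Y. f g y = 0")
    case True
    hence "Y' = Y" unfolding Y_def Y'_def by auto
    thus ?thesis using F unfolding Y_def Y'_def by auto
  next
    case False
    then obtain y1 where y1: "y1 \<in> Y" "f g y1 \<noteq> 0" by blast
    define y0 where "y0 = inverse (f g y1) *\<^sub>R y1"
    have gy0: "f g y0 = 1" unfolding y0_def using y1(2) linear_scale[OF lg] by simp
    have y0Y: "y0 \<in> Y" using y1(1) lS unfolding Y_def y0_def by (auto simp: linear_scale)
    have sub: "Y \<union> F \<subseteq> span (Y' \<union> insert y0 F)"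
    proof
      fix y assume y: "y \<in> Y \<union> F"
      show "y \<in> span (Y' \<union> insert y0 F)"
      proof (cases "y \<in> F")
        case True thus ?thesis by (simp add: span_base)
      next
        case False
        hence yY: "y \<in> Y" using y by blast
        have "y - f g y *\<^sub>R y0 \<in> Y'"
          using yY y0Y gy0 lS lg unfolding Y_def Y'_def
          by (auto simp: linear_diff linear_scale)
        hence 1: "y - f g y *\<^sub>R y0 \<in> span (Y' \<union> insert y0 F)" by (simp add: span_base)
        have 2: "f g y *\<^sub>R y0 \<in> span (Y' \<union> insert y0 F)"
          by (intro span_scale span_base) simp
        have "y = (y - f g y *\<^sub>R y0) + f g y *\<^sub>R y0" by simp
        thus ?thesis using span_add[OF 1 2] by metis
      qed
    qed
    have "UNIV \<subseteq> span (Y' \<union> insert y0 F)"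
      using span_minimal[OF sub subspace_span] F(2) unfolding Y_def by simp
    thus ?thesis using F(1) unfolding Y'_def by (intro exI[of _ "insert y0 F"]) auto
  qed
qed

lemma interior_finite_Union_closed:
  assumes "finite I" "\<And>i. i \<in> I \<Longrightarrow> closed (T i)" "\<And>i. i \<in> I \<Longrightarrow> interior (T i) = {}"
  shows "interior (\<Union>i\<in>I. T i) = {}"
  using assms
proof (induction I rule: finite_induct)
  case empty thus ?case by simp
next
  case (insert j I)
  have "interior (T j \<union> (\<Union>i\<in>I. T i)) = interior (T j)"
    using insert by (intro interior_closed_Un_empty_interior) auto
  thus ?case using insert by simp
qed

lemma ball_in_A:
  fixes A :: "'a::real_normed_vector set"
  assumes bal: "balanced A" and cvx: "convex A" and cl: "closed A"
    and fin: "finite Os" and cov: "cball 0 1 \<subseteq> minkowski_sum A Os"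
  shows "\<exists>e>0. ball 0 e \<subseteq> A"
proof -
  define T where "T w = (+) w ` A" for w
  have clT: "closed (T w)" for w unfolding T_def
    using closed_translation[OF cl, of w] .
  have covT: "ball 0 1 \<subseteq> (\<Union>w\<in>Os. T w)"
  proof
    fix v :: 'a assume "v \<in> ball 0 1"
    hence "v \<in> minkowski_sum A Os" using cov ball_subset_cball by blast
    then obtain a w where "v = a + w" "a \<in> A" "w \<in> Os" unfolding minkowski_sum_def by blast
    hence "v \<in> T w" unfolding T_def by (simp add: add.commute)
    thus "v \<in> (\<Union>w\<in>Os. T w)" using \<open>w \<in> Os\<close> by blast
  qed
  have "\<exists>w\<in>Os. interior (T w) \<noteq> {}"
  proof (rule ccontr)
    assume "\<not> ?thesis"
    hence "interior (\<Union>w\<in>Os. T w) = {}"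
      using interior_finite_Union_closed[of Os T, OF fin clT] \<open>\<not> (\<exists>w\<in>Os. interior (T w) \<noteq> {})\<close> by simp
    moreover have "ball 0 1 \<subseteq> interior (\<Union>w\<in>Os. T w)"
      using covT open_ball by (rule interior_maximal)
    moreover have "(0::'a) \<in> ball 0 1" by simp
    ultimately show False by (metis empty_iff subsetD)
  qed
  then obtain w z where w: "w \<in> Os" "z \<in> interior (T w)" by blast
  moreover have "open (interior (T w))" by (rule open_interior)
  ultimately obtain e where e: "e > 0" "ball z e \<subseteq> interior (T w)"
    using open_contains_ball by metis
  hence e: "e > 0" "ball z e \<subseteq> T w" using interior_subset[of "T w"] by auto
  define c where "c = z - w"
  have bc: "v \<in> A" if "v \<in> ball c e" for v
  proof -
    have "v + w \<in> ball z e" using that unfolding c_def by (simp add: dist_norm algebra_simps)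
    hence "v + w \<in> T w" using e by blast
    then obtain a where "a \<in> A" "v + w = w + a" unfolding T_def by blast
    thus ?thesis by (simp add: add.commute)
  qed
  have "ball 0 e \<subseteq> A"
  proof
    fix v :: 'a assume v: "v \<in> ball 0 e"
    have 1: "c + v \<in> A" using v by (intro bc) (simp add: dist_norm)
    have "c - v \<in> A" using v by (intro bc) (simp add: dist_norm)
    hence 2: "v - c \<in> A" using balancedD[OF bal, of "-1" "c - v"] by simp
    have "(1/2) *\<^sub>R (c + v) + (1/2) *\<^sub>R (v - c) \<in> A"
      using convexD[OF cvx 1 2, of "1/2" "1/2"] by simp
    also have "(1/2) *\<^sub>R (c + v) + (1/2) *\<^sub>R (v - c) = v" by (simp add: algebra_simps scaleR_2[symmetric])
    finally show "v \<in> A" .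
  qed
  thus ?thesis using e by blast
qed



definition gA :: "'a::real_vector set \<Rightarrow> 'a \<Rightarrow> real" where
  "gA A x = Inf {t. 0 < t \<and> inverse t *\<^sub>R x \<in> A}"

locale gctx =
  fixes A :: "'a::real_normed_vector set" and e :: real
  assumes bal: "balanced A" and cvx: "convex A" and e: "e > 0" and ballA: "ball 0 e \<subseteq> A"
begin

lemma ne: "{t. 0 < t \<and> inverse t *\<^sub>R x \<in> A} \<noteq> {}"
proof -
  define t where "t = (norm x + 1) / e"
  have t: "t > 0" unfolding t_def using e norm_ge_zero[of x] by (intro divide_pos_pos) linarith+
  have "norm (inverse t *\<^sub>R x) = norm x * e / (norm x + 1)"
    using t e unfolding t_def by (simp add: field_simps)
  also have "\<dots> < e"
  proof -
    have "e * norm x < e * (norm x + 1)" using e by simp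
    moreover have "0 < norm x + 1" using norm_ge_zero[of x] by linarith
    ultimately show ?thesis by (simp add: pos_divide_less_eq mult.commute)
  qed
  finally have "inverse t *\<^sub>R x \<in> A" using ballA by (auto simp: dist_norm)
  thus ?thesis using t by blast
qed

lemma bdd: "bdd_below {t. 0 < t \<and> inverse t *\<^sub>R x \<in> A}"
  by (rule bdd_belowI[where m=0]) auto

lemma g_le: "0 < t \<Longrightarrow> inverse t *\<^sub>R x \<in> A \<Longrightarrow> gA A x \<le> t"
  unfolding gA_def using bdd by (intro cInf_lower) auto

lemma g_ge: "(\<And>t. 0 < t \<Longrightarrow> inverse t *\<^sub>R x \<in> A \<Longrightarrow> a \<le> t) \<Longrightarrow> a \<le> gA A x"
  unfolding gA_def using ne by (intro cInf_greatest) auto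

lemma g_less: "gA A x < s \<Longrightarrow> \<exists>t. 0 < t \<and> t < s \<and> inverse t *\<^sub>R x \<in> A"
  unfolding gA_def using cInf_lessD[OF ne] by blast

lemma g_nonneg: "0 \<le> gA A x"
  by (rule g_ge) simp

lemma mono_in: "0 < t \<Longrightarrow> t \<le> s \<Longrightarrow> inverse t *\<^sub>R x \<in> A \<Longrightarrow> inverse s *\<^sub>R x \<in> A"
  using balancedD[OF bal, of "t / s" "inverse t *\<^sub>R x"] by (simp add: field_simps)

lemma zero_in: "0 \<in> A" using ballA e by auto

lemma g_sublin: "sublin (gA A)"
proof -
  have add: "gA A (x + y) \<le> gA A x + gA A y" for x y
  proof -
    have key: "gA A (x + y) \<le> s + t" if s: "0 < s" "inverse s *\<^sub>R x \<in> A" and t: "0 < t" "inverse t *\<^sub>R y \<in> A" for s t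
    proof -
      have "(s / (s + t)) *\<^sub>R (inverse s *\<^sub>R x) + (t / (s + t)) *\<^sub>R (inverse t *\<^sub>R y) \<in> A"
        using s t by (intro convexD[OF cvx]) (auto simp: add_divide_distrib[symmetric])
      also have "(s / (s + t)) *\<^sub>R (inverse s *\<^sub>R x) + (t / (s + t)) *\<^sub>R (inverse t *\<^sub>R y) = inverse (s + t) *\<^sub>R (x + y)"
        using s t by (simp add: field_simps scaleR_right_distrib)
      finally show ?thesis using s t by (intro g_le) auto
    qed
    have "gA A (x + y) - t \<le> gA A x" if "0 < t" "inverse t *\<^sub>R y \<in> A" for t
      by (rule g_ge) (use key that in force)
    hence "gA A (x + y) - gA A x \<le> gA A y" by (intro g_ge) force
    thus ?thesis by simp
  qed
  have zero: "gA A 0 = 0"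
  proof -
    have "gA A 0 \<le> t" if "t > 0" for t using g_le[of t 0] that zero_in by simp
    hence "gA A 0 \<le> 0" by (metis field_lbound_gt_zero less_le_not_le linorder_not_le g_nonneg)
    thus ?thesis using g_nonneg[of 0] by simp
  qed
  have sc: "gA A (c *\<^sub>R x) = c * gA A x" if c: "0 \<le> c" for c x
  proof (cases "c = 0")
    case True thus ?thesis using zero by simp
  next
    case False
    hence c: "c > 0" using c by simp
    have 1: "gA A (c *\<^sub>R x) / c \<le> gA A x"
    proof (rule g_ge)
      fix t assume t: "0 < t" "inverse t *\<^sub>R x \<in> A"
      have eq: "inverse (c * t) *\<^sub>R (c *\<^sub>R x) = inverse t *\<^sub>R x" using c by (simp add: field_simps)
      have "inverse (c * t) *\<^sub>R (c *\<^sub>R x) \<in> A" unfolding eq using t(2) .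
      hence "gA A (c *\<^sub>R x) \<le> c * t" using t c by (intro g_le) auto
      thus "gA A (c *\<^sub>R x) / c \<le> t" using c by (simp add: divide_le_eq mult.commute)
    qed
    have 2: "c * gA A x \<le> gA A (c *\<^sub>R x)"
    proof (rule g_ge)
      fix t assume t: "0 < t" "inverse t *\<^sub>R (c *\<^sub>R x) \<in> A"
      have eq: "inverse (t / c) *\<^sub>R x = inverse t *\<^sub>R (c *\<^sub>R x)" using c by (simp add: field_simps)
      have "inverse (t / c) *\<^sub>R x \<in> A" unfolding eq using t(2) .
      hence "gA A x \<le> t / c" using t c by (intro g_le) auto
      thus "c * gA A x \<le> t" using c by (simp add: le_divide_eq mult.commute)
    qed
    show ?thesis using 1 2 c by (simp add: divide_le_eq mult.commute)
  qed
  show ?thesis unfolding sublin_def using add sc by blast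
qed

end



theorem corollary4p3:
  fixes A :: "'a::banach set"
  assumes "balanced A" and "bounded A" and "convex A" and "closed A"
    and "finite Os" and "cball 0 1 \<subseteq> minkowski_sum A Os"
    and "0 < lam" and "lam < 1/2"
  shows "\<exists>x\<in>A. \<exists>Y. finite_codim_subspace Y \<and>
           (\<lambda>y. x + lam *\<^sub>R y) ` (cball 0 1 \<inter> Y) \<subseteq> A"
proof -
  note bal = assms(1) and cvx = assms(3) and cl = assms(4) and fin = assms(5) and cov = assms(6)
  obtain e where e: "e > 0" "ball 0 e \<subseteq> A" using ball_in_A[OF bal cvx cl fin cov] by blast
  interpret g: gctx A e using bal cvx e by unfold_locales
  define p where "p = gA A"
  have ps: "sublin p" unfolding p_def by (rule g.g_sublin)
  have "\<forall>w\<in>Os. \<exists>f. linear f \<and> (\<forall>x. f x \<le> p x) \<and> f w = p w"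
    using sublin_linear_dominated[OF ps] by blast
  then obtain f where f: "\<And>w. w \<in> Os \<Longrightarrow> linear (f w)" "\<And>w x. w \<in> Os \<Longrightarrow> f w x \<le> p x"
    "\<And>w. w \<in> Os \<Longrightarrow> f w w = p w"
    by metis
  define Y where "Y = {y. \<forall>w\<in>Os. f w y = 0}"
  have subY: "subspace Y" unfolding subspace_def Y_def
    using f(1) by (auto simp: linear_0 linear_add linear_scale)
  obtain F where F: "finite F" "span (Y \<union> F) = UNIV"
    using kernels_finite_codim[OF fin, of f] f(1) unfolding Y_def by blast
  have fc: "finite_codim_subspace Y" unfolding finite_codim_subspace_def using subY F by blast
  have "(\<lambda>y. 0 + lam *\<^sub>R y) ` (cball 0 1 \<inter> Y) \<subseteq> A"
  proof
    fix z assume "z \<in> (\<lambda>y. 0 + lam *\<^sub>R y) ` (cball 0 1 \<inter> Y)"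
    then obtain y where y: "y \<in> cball 0 1" "y \<in> Y" and z: "z = lam *\<^sub>R y" by auto
    obtain a w where aw: "y = a + w" "a \<in> A" "w \<in> Os"
      using y(1) cov unfolding minkowski_sum_def by blast
    have "-a \<in> A" using balancedD[OF bal, of "-1" a] aw(2) by simp
    hence pa: "p (-a) \<le> 1" unfolding p_def using g.g_le[of 1 "-a"] by simp
    have "p w = f w w - f w y" using f(3)[OF aw(3)] y(2) aw(3) unfolding Y_def by simp
    also have "\<dots> = f w (-a)" using linear_diff[OF f(1)[OF aw(3)], of w y] aw(1) by simp
    also have "\<dots> \<le> 1" using f(2)[OF aw(3), of "-a"] pa by simp
    finally have pw: "p w \<le> 1" .
    define s where "s = 1 / lam - 1"
    have s1: "s > 1" unfolding s_def using assms(7,8) by (simp add: field_simps)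
    obtain t where t: "0 < t" "t < s" "inverse t *\<^sub>R w \<in> A"
      using g.g_less[of w s] pw s1 unfolding p_def by auto
    have ws: "inverse s *\<^sub>R w \<in> A" using g.mono_in[OF t(1) _ t(3), of s] t(2) by simp
    have "lam *\<^sub>R a + (1 - lam) *\<^sub>R (inverse s *\<^sub>R w) \<in> A"
      using convexD[OF cvx aw(2) ws, of lam "1 - lam"] assms(7,8) by simp
    moreover have "(1 - lam) * inverse s = lam"
      unfolding s_def using assms(7,8) by (simp add: field_simps)
    ultimately have "lam *\<^sub>R a + lam *\<^sub>R w \<in> A" by (simp add: scaleR_scaleR)
    thus "z \<in> A" using z aw(1) by (simp add: scaleR_right_distrib)
  qed
  thus ?thesis using g.zero_in fc by blast
qed

end
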